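(* Let $\mathcal{H}$ be a $3$-graph and let $\mathcal{H}_t$ be a $3$-graph obtained from $\mathcal{H}$ by applying Algorithm 1 (described in the context). Let $T\subseteq V(\mathcal{H}_t)$ contain exactly one vertex from each equivalence class of $\mathcal{H}_t$. Then (a) $|\mathcal{H}_t|\ge|\mathcal{H}|$; and (b) $\mathcal{H}_t[T]$ is $2$-covered and $\mathcal{H}_t$ is a blowup of $\mathcal{H}_t[T]$.
   Context: For a vertex $v$ of a $3$-graph $\mathcal{H}$, its link is $L(v)=\{A\in\binom{V(\mathcal{H})}{2}: A\cup\{v\}\in\mathcal{H}\}$ and its degree is $d(v)=|L(v)|$. Two vertices are adjacent if some edge contains both. Two non-adjacent vertices $u,v$ are equivalent if $L(u)=L(v)$ (every vertex is equivalent to itself); $C_v$ denotes the equivalence class of $v$. Algorithm 1 (symmetrization): as long as $\mathcal{H}$ has two non-adjacent non-equivalent vertices, pick such $u,v$ with $d(u)\ge d(v)$, delete all vertices of $C_v$ (with their edges) and add $|C_v|$ new vertices, each a copy of $u$ (i.e. for every edge $E\ni u$ and each new vertex $v'$, add $E\setminus\{u\}\cup\{v'\}$), labelling the new vertices by the labels of $C_v$. Stop when no pair of non-adjacent non-equivalent vertices remains; the result is $\mathcal{H}_t$. A $3$-graph is $2$-covered if every pair of its vertices lies in some edge. A blowup of a $3$-graph $\mathcal{T}$ on $[s]$ replaces vertex $i$ by a set of size $t_i\ge1$ (pairwise disjoint) and each edge by the complete $3$-partite $3$-graph on the corresponding sets. *)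

theory Defs
  imports Main
begin

definition hypergraph3 :: "'a set \<Rightarrow> 'a set set \<Rightarrow> bool" where
  "hypergraph3 V H \<longleftrightarrow> finite V \<and> (\<forall>E\<in>H. E \<subseteq> V \<and> card E = 3)"

definition link :: "'a set \<Rightarrow> 'a set set \<Rightarrow> 'a \<Rightarrow> 'a set set" where
  "link V H v = {A. A \<subseteq> V \<and> card A = 2 \<and> A \<union> {v} \<in> H}"

definition deg :: "'a set \<Rightarrow> 'a set set \<Rightarrow> 'a \<Rightarrow> nat" where
  "deg V H v = card (link V H v)"

definition adjacent :: "'a set set \<Rightarrow> 'a \<Rightarrow> 'a \<Rightarrow> bool" where
  "adjacent H u v \<longleftrightarrow> (\<exists>E\<in>H. u \<in> E \<and> v \<in> E)"

definition equivalent :: "'a set \<Rightarrow> 'a set set \<Rightarrow> 'a \<Rightarrow> 'a \<Rightarrow> bool" where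
  "equivalent V H u v \<longleftrightarrow> u = v \<or> (\<not> adjacent H u v \<and> link V H u = link V H v)"

definition eqclass :: "'a set \<Rightarrow> 'a set set \<Rightarrow> 'a \<Rightarrow> 'a set" where
  "eqclass V H v = {w \<in> V. equivalent V H w v}"

text \<open>One step of Algorithm 1 (symmetrization). The new copies of u carry the labels of C_v,
  so the vertex set V is unchanged.\<close>
definition sym_step :: "'a set \<Rightarrow> 'a set set \<Rightarrow> 'a set set \<Rightarrow> bool" where
  "sym_step V H H' \<longleftrightarrow> (\<exists>u v. u \<in> V \<and> v \<in> V \<and> \<not> adjacent H u v \<and> \<not> equivalent V H u v
      \<and> deg V H u \<ge> deg V H v
      \<and> H' = {E \<in> H. E \<inter> eqclass V H v = {}}
             \<union> {insert w (E - {u}) | E w. E \<in> H \<and> u \<in> E \<and> w \<in> eqclass V H v})"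

definition sym_terminal :: "'a set \<Rightarrow> 'a set set \<Rightarrow> bool" where
  "sym_terminal V H \<longleftrightarrow> (\<forall>u\<in>V. \<forall>v\<in>V. \<not> adjacent H u v \<longrightarrow> equivalent V H u v)"

definition induced :: "'a set set \<Rightarrow> 'a set \<Rightarrow> 'a set set" where
  "induced H T = {E \<in> H. E \<subseteq> T}"

definition two_covered :: "'a set \<Rightarrow> 'a set set \<Rightarrow> bool" where
  "two_covered S F \<longleftrightarrow> (\<forall>x\<in>S. \<forall>y\<in>S. x \<noteq> y \<longrightarrow> (\<exists>E\<in>F. x \<in> E \<and> y \<in> E))"

text \<open>(W,G) is a blowup of (S,F): W is partitioned into nonempty parts indexed by S
  (the fibres of phi) and G is the union of the complete 3-partite 3-graphs
  on the parts corresponding to the edges of F.\<close>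
definition is_blowup :: "'a set \<Rightarrow> 'a set set \<Rightarrow> 'b set \<Rightarrow> 'b set set \<Rightarrow> bool" where
  "is_blowup W G S F \<longleftrightarrow> (\<exists>\<phi>. \<phi> ` W = S \<and>
      G = {E. E \<subseteq> W \<and> card E = 3 \<and> inj_on \<phi> E \<and> \<phi> ` E \<in> F})"

end

theory Submission
  imports Defs
begin

lemma replace:
  assumes hg: "hypergraph3 V H" and S: "S \<in> H" "x \<in> S" and eq: "equivalent V H y x"
  shows "insert y (S - {x}) \<in> H"
proof (cases "y = x")
  case True thus ?thesis using S by (simp add: insert_absorb)
next
  case False
  with eq have L: "link V H y = link V H x" by (simp add: equivalent_def)
  have SV: "S \<subseteq> V" "card S = 3" using hg S unfolding hypergraph3_def by auto
  have fin: "finite S" using SV by (metis card.infinite zero_neq_numeral)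
  have "S - {x} \<in> link V H x" unfolding link_def using SV S fin
    by (auto simp: insert_absorb)
  hence "S - {x} \<in> link V H y" using L by simp
  thus ?thesis unfolding link_def by simp
qed

lemma equiv_sym: "equivalent V H a b \<Longrightarrow> equivalent V H b a"
  unfolding equivalent_def adjacent_def by metis

lemma edge_equiv: "E \<in> H \<Longrightarrow> x \<in> E \<Longrightarrow> y \<in> E \<Longrightarrow> equivalent V H x y \<Longrightarrow> x = y"
  unfolding equivalent_def adjacent_def by blast

lemma equiv_trans:
  assumes hg: "hypergraph3 V H" and ab: "equivalent V H a b" and bc: "equivalent V H b c"
  shows "equivalent V H a c"
proof (cases "a = b \<or> b = c \<or> a = c")
  case True
  then consider "a = b" | "b = c" | "a = c" by blast
  then show ?thesis
  proof cases
    case 1 then show ?thesis using bc by simp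
  next
    case 2 then show ?thesis using ab by simp
  next
    case 3 then show ?thesis by (simp add: equivalent_def)
  qed
next
  case False
  have L1: "link V H a = link V H b" using ab False unfolding equivalent_def by blast
  have L2: "link V H b = link V H c" using bc False unfolding equivalent_def by blast
  have nbc: "\<not> adjacent H b c" using bc False unfolding equivalent_def by blast
  have "\<not> adjacent H a c"
  proof
    assume "adjacent H a c"
    then obtain E where E: "E \<in> H" "a \<in> E" "c \<in> E" unfolding adjacent_def by blast
    have I: "insert b (E - {a}) \<in> H" using replace[OF hg E(1,2) equiv_sym[OF ab]] .
    have ca: "c \<noteq> a" using False by blast
    have Ib: "b \<in> insert b (E - {a})" by simp
    have Ic: "c \<in> insert b (E - {a})" by (rule insertI2, rule DiffI, rule E(3)) (use ca in blast)
    have "adjacent H b c" unfolding adjacent_def by (intro bexI[of _ "insert b (E - {a})"] conjI Ib Ic I)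
    with nbc show False by (rule notE)
  qed
  thus ?thesis using L1 L2 unfolding equivalent_def by simp
qed

lemma card3_distinct:
  assumes "card {x,y,z} = 3" shows "x \<noteq> y \<and> x \<noteq> z \<and> y \<noteq> z"
proof -
  have "card {x,y,z} \<le> 2" if "x = y \<or> x = z \<or> y = z"
  proof -
    from that have "{x,y,z} = {y,z} \<or> {x,y,z} = {x,y}" by auto
    moreover have "card {y,z} \<le> 2" by (cases "y = z") simp_all
    moreover have "card {x,y} \<le> 2" by (cases "x = y") simp_all
    ultimately show ?thesis by auto
  qed
  thus ?thesis using assms by linarith
qed

lemma map_edge:
  assumes hg: "hypergraph3 V H" and E: "E \<in> H" and f: "\<forall>x\<in>E. equivalent V H (f x) x"
  shows "f ` E \<in> H"
proof -
  have c3: "\<And>S. S \<in> H \<Longrightarrow> card S = 3" using hg by (simp add: hypergraph3_def)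
  obtain a b c where abc: "E = {a,b,c}" "a\<noteq>b" "b\<noteq>c" "a\<noteq>c"
    using c3[OF E] by (auto simp: card_3_iff)
  have fa: "equivalent V H (f a) a" and fb: "equivalent V H (f b) b" and fc: "equivalent V H (f c) c"
    using f abc(1) by simp_all
  have E0: "{a,b,c} \<in> H" using E abc(1) by simp
  have "insert (f a) ({a,b,c} - {a}) \<in> H" by (rule replace[OF hg E0 _ fa]) simp
  moreover have "insert (f a) ({a,b,c} - {a}) = {f a, b, c}" using abc by auto
  ultimately have E1: "{f a, b, c} \<in> H" by simp
  have n1: "f a \<noteq> b" "f a \<noteq> c" using card3_distinct[OF c3[OF E1]] by auto
  have "insert (f b) ({f a, b, c} - {b}) \<in> H" by (rule replace[OF hg E1 _ fb]) simp
  moreover have "insert (f b) ({f a, b, c} - {b}) = {f a, f b, c}" using abc n1 by auto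
  ultimately have E2: "{f a, f b, c} \<in> H" by simp
  have n2: "f a \<noteq> c" "f b \<noteq> c" "f a \<noteq> f b" using card3_distinct[OF c3[OF E2]] by auto
  have "insert (f c) ({f a, f b, c} - {c}) \<in> H" by (rule replace[OF hg E2 _ fc]) simp
  moreover have "insert (f c) ({f a, f b, c} - {c}) = {f a, f b, f c}" using abc n2 by auto
  ultimately show ?thesis using abc(1) by simp
qed


lemma star_card:
  assumes hg: "hypergraph3 V H"
  shows "card {E \<in> H. x \<in> E} = deg V H x"
proof -
  have HV: "\<And>E. E \<in> H \<Longrightarrow> E \<subseteq> V" and H3: "\<And>E. E \<in> H \<Longrightarrow> card E = 3"
    using hg unfolding hypergraph3_def by auto
  have fin: "\<And>E. E \<in> H \<Longrightarrow> finite E" using H3 by (metis card.infinite zero_neq_numeral)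
  have inj: "inj_on (\<lambda>E. E - {x}) {E \<in> H. x \<in> E}"
  proof (rule inj_onI)
    fix E1 E2 assume "E1 \<in> {E \<in> H. x \<in> E}" "E2 \<in> {E \<in> H. x \<in> E}" "E1 - {x} = E2 - {x}"
    then show "E1 = E2" by (metis (no_types, lifting) insert_Diff mem_Collect_eq)
  qed
  have img: "(\<lambda>E. E - {x}) ` {E \<in> H. x \<in> E} = link V H x"
  proof (rule set_eqI, rule iffI)
    fix A assume "A \<in> (\<lambda>E. E - {x}) ` {E \<in> H. x \<in> E}"
    then obtain E where E: "E \<in> H" "x \<in> E" and A: "A = E - {x}" by blast
    have "A \<subseteq> V" using HV[OF E(1)] A by blast
    moreover have "card A = 2" using A H3[OF E(1)] fin[OF E(1)] E(2) by simp
    moreover have "A \<union> {x} = E" using A E(2) by blast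
    ultimately show "A \<in> link V H x" unfolding link_def using E(1) by simp
  next
    fix A assume "A \<in> link V H x"
    hence A: "A \<subseteq> V" "card A = 2" "A \<union> {x} \<in> H" unfolding link_def by simp_all
    have "x \<notin> A"
    proof
      assume "x \<in> A" hence "A \<union> {x} = A" by blast
      thus False using A H3[OF A(3)] by simp
    qed
    hence "A = (A \<union> {x}) - {x}" by blast
    moreover have "A \<union> {x} \<in> {E \<in> H. x \<in> E}" using A(3) by simp
    ultimately show "A \<in> (\<lambda>E. E - {x}) ` {E \<in> H. x \<in> E}" by (rule image_eqI)
  qed
  show ?thesis unfolding deg_def using bij_betw_same_card[of "\<lambda>E. E - {x}"] inj img
    by (simp add: bij_betw_def)
qed

lemma sym_step_mono:
  assumes hg: "hypergraph3 V H" and st: "sym_step V H H'"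
  shows "hypergraph3 V H' \<and> card H \<le> card H'"
proof -
  obtain u v where uV: "u \<in> V" and vV: "v \<in> V" and nadj: "\<not> adjacent H u v"
    and neq: "\<not> equivalent V H u v" and dg: "deg V H v \<le> deg V H u"
    and H': "H' = {E \<in> H. E \<inter> eqclass V H v = {}} \<union> {insert w (E - {u}) | E w. E \<in> H \<and> u \<in> E \<and> w \<in> eqclass V H v}"
    using st unfolding sym_step_def by blast
  define C where "C = eqclass V H v"
  define K where "K = {E \<in> H. E \<inter> C = {}}"
  define R where "R = {E \<in> H. E \<inter> C \<noteq> {}}"
  define star where "star x = {E \<in> H. x \<in> E}" for x
  define g where "g = (\<lambda>(E, w). insert w (E - {u}))"
  have N: "{insert w (E - {u}) | E w. E \<in> H \<and> u \<in> E \<and> w \<in> C} = g ` (star u \<times> C)"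
    unfolding g_def star_def by auto
  have H'2: "H' = K \<union> g ` (star u \<times> C)" using H' N unfolding K_def C_def by simp
  have finV: "finite V" and HV: "\<And>E. E \<in> H \<Longrightarrow> E \<subseteq> V" and H3: "\<And>E. E \<in> H \<Longrightarrow> card E = 3"
    using hg unfolding hypergraph3_def by auto
  have fin: "\<And>E. E \<in> H \<Longrightarrow> finite E" using H3 by (metis card.infinite zero_neq_numeral)
  have "H \<subseteq> Pow V" using HV by blast
  hence finH: "finite H" using finV finite_subset by blast
  have CV: "C \<subseteq> V" unfolding C_def eqclass_def by blast
  have finC: "finite C" using CV finV finite_subset by blast
  have Ceq: "\<And>w. w \<in> C \<Longrightarrow> equivalent V H w v" unfolding C_def eqclass_def by blast
  have uw: "w \<notin> E" if w: "w \<in> C" and E: "E \<in> H" "u \<in> E" for w E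
  proof
    assume wE: "w \<in> E"
    have I: "insert v (E - {w}) \<in> H" using replace[OF hg E(1) wE equiv_sym[OF Ceq[OF w]]] .
    have "u \<noteq> w"
    proof
      assume "u = w" then have "equivalent V H u v" using Ceq[OF w] by simp
      with neq show False by (rule notE)
    qed
    hence Iu: "u \<in> insert v (E - {w})" using E(2) by simp
    have Iv: "v \<in> insert v (E - {w})" by simp
    have "adjacent H u v" unfolding adjacent_def
      by (intro bexI[of _ "insert v (E - {w})"] conjI Iu Iv I)
    with nadj show False by (rule notE)
  qed
  have disj: "K \<inter> g ` (star u \<times> C) = {}"
  proof -
    have "x \<notin> K" if "x \<in> g ` (star u \<times> C)" for x
    proof -
      from that obtain E w where "w \<in> C" and x: "x = insert w (E - {u})" unfolding g_def by auto
      hence "w \<in> x \<inter> C" by simp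
      thus ?thesis unfolding K_def by blast
    qed
    thus ?thesis by blast
  qed
  have HKR: "H = K \<union> R" "K \<inter> R = {}" unfolding K_def R_def by blast+
  have R_U: "R = (\<Union>w\<in>C. star w)" unfolding R_def star_def by blast
  have scard: "\<And>x. card (star x) = deg V H x" unfolding star_def using star_card[OF hg] by simp
  have deg_C: "deg V H w = deg V H v" if "w \<in> C" for w
  proof (cases "w = v")
    case False
    then have "link V H w = link V H v" using Ceq[OF that] unfolding equivalent_def by simp
    then show ?thesis unfolding deg_def by simp
  qed simp
  have "card R \<le> (\<Sum>w\<in>C. card (star w))" unfolding R_U by (rule card_UN_le[OF finC])
  also have "\<dots> = (\<Sum>w\<in>C. deg V H v)" using scard deg_C by simp
  also have "\<dots> = card C * deg V H v" by simp
  finally have cardR: "card R \<le> card C * deg V H v" .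
  have inj_g: "inj_on g (star u \<times> C)"
  proof (rule inj_onI)
    fix p q assume p: "p \<in> star u \<times> C" and q: "q \<in> star u \<times> C" and eq: "g p = g q"
    obtain E1 w1 where p': "p = (E1, w1)" by (cases p)
    obtain E2 w2 where q': "q = (E2, w2)" by (cases q)
    have E1: "E1 \<in> H" "u \<in> E1" "w1 \<in> C" using p p' unfolding star_def by auto
    have E2: "E2 \<in> H" "u \<in> E2" "w2 \<in> C" using q q' unfolding star_def by auto
    have eq': "insert w1 (E1 - {u}) = insert w2 (E2 - {u})" using eq p' q' unfolding g_def by simp
    have n12: "w1 \<notin> E2" using uw[OF E1(3) E2(1,2)] .
    have n11: "w1 \<notin> E1" using uw[OF E1(3) E1(1,2)] .
    have n22: "w2 \<notin> E2" using uw[OF E2(3) E2(1,2)] .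
    have "w1 \<in> insert w2 (E2 - {u})" using eq' by (metis insertI1)
    hence w: "w1 = w2" using n12 by blast
    have "E1 - {u} = E2 - {u}"
      using eq' n11 n22 w insert_ident[of w1 "E1 - {u}" "E2 - {u}"] by simp
    hence "E1 = E2" using E1(2) E2(2) by (metis insert_Diff)
    thus "p = q" using p' q' w by simp
  qed
  have finstar: "finite (star u)" unfolding star_def using finH by simp
  have cardN: "card (g ` (star u \<times> C)) = deg V H u * card C"
    using card_image[OF inj_g] card_cartesian_product[of "star u" C] scard by simp
  have finK: "finite K" unfolding K_def using finH by simp
  have finR: "finite R" unfolding R_def using finH by simp
  have finN: "finite (g ` (star u \<times> C))" using finstar finC by simp
  have cH: "card H = card K + card R" using card_Un_disjoint[OF finK finR HKR(2)] HKR(1) by simp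
  have cH': "card H' = card K + deg V H u * card C"
    using card_Un_disjoint[OF finK finN disj] H'2 cardN by simp
  have "card C * deg V H v \<le> deg V H u * card C" using dg by (simp add: mult.commute)
  hence le: "card H \<le> card H'" using cH cH' cardR by linarith
  have "E \<subseteq> V \<and> card E = 3" if E: "E \<in> H'" for E
  proof (cases "E \<in> K")
    case True then show ?thesis using HV H3 unfolding K_def by blast
  next
    case False
    then have "E \<in> g ` (star u \<times> C)" using E H'2 by blast
    then obtain F w where F: "F \<in> H" "u \<in> F" "w \<in> C" and Ed: "E = insert w (F - {u})"
      unfolding g_def star_def by auto
    have "w \<notin> F - {u}" using uw[OF F(3) F(1,2)] by simp
    moreover have "card (F - {u}) = 2" using H3[OF F(1)] F(2) fin[OF F(1)] by simp
    moreover have "finite (F - {u})" using fin[OF F(1)] by simp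
    ultimately have "card E = 3" using Ed by simp
    moreover have "E \<subseteq> V" using Ed HV[OF F(1)] CV F(3) by blast
    ultimately show ?thesis by simp
  qed
  hence "hypergraph3 V H'" unfolding hypergraph3_def using finV by blast
  with le show ?thesis by simp
qed


theorem lemma4p6:
  fixes V :: "'a set" and H Ht :: "'a set set" and T :: "'a set"
  assumes "hypergraph3 V H"
    and "(sym_step V)\<^sup>*\<^sup>* H Ht"
    and "sym_terminal V Ht"
    and "T \<subseteq> V"
    and "\<forall>x\<in>V. \<exists>!t. t \<in> T \<and> equivalent V Ht t x"
  shows "card Ht \<ge> card H
    \<and> two_covered T (induced Ht T) \<and> is_blowup V Ht T (induced Ht T)"
proof -
  from assms(2) have inv: "hypergraph3 V Ht \<and> card H \<le> card Ht"
  proof (induction rule: rtranclp_induct)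
    case base show ?case using assms(1) by simp
  next
    case (step y z)
    then show ?case using sym_step_mono[of V y z] by simp
  qed
  hence hg: "hypergraph3 V Ht" and cardle: "card H \<le> card Ht" by simp_all
  have HV: "\<And>E. E \<in> Ht \<Longrightarrow> E \<subseteq> V" and H3: "\<And>E. E \<in> Ht \<Longrightarrow> card E = 3"
    using hg unfolding hypergraph3_def by auto
  define \<phi> where "\<phi> x = (THE t. t \<in> T \<and> equivalent V Ht t x)" for x
  have ex1: "\<And>x. x \<in> V \<Longrightarrow> \<exists>!t. t \<in> T \<and> equivalent V Ht t x" using assms(5) by blast
  have phi1: "\<phi> x \<in> T \<and> equivalent V Ht (\<phi> x) x" if "x \<in> V" for x
    unfolding \<phi>_def by (rule theI'[OF ex1[OF that]])
  have reflT: "\<phi> t = t" if "t \<in> T" for t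
  proof -
    have tV: "t \<in> V" using that assms(4) by blast
    have "t \<in> T \<and> equivalent V Ht t t" using that by (simp add: equivalent_def)
    thus ?thesis unfolding \<phi>_def by (rule the1_equality[OF ex1[OF tV]])
  qed
  have uniqT: "x = y" if "x \<in> T" "y \<in> T" "equivalent V Ht x y" for x y
  proof -
    have yV: "y \<in> V" using that assms(4) by blast
    have "\<phi> y = x" unfolding \<phi>_def by (rule the1_equality[OF ex1[OF yV]]) (use that in simp)
    moreover have "\<phi> y = y" using reflT[OF that(2)] .
    ultimately show ?thesis by simp
  qed
  have edge_map: "\<phi> ` E \<in> Ht" if "E \<in> Ht" for E
  proof (rule map_edge[OF hg that])
    show "\<forall>x\<in>E. equivalent V Ht (\<phi> x) x" using phi1 HV[OF that] by blast
  qed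
  have edge_T: "\<phi> ` E \<subseteq> T" if "E \<subseteq> V" for E using phi1 that by blast
  have inj_edge: "inj_on \<phi> E" if E: "E \<in> Ht" for E
  proof (rule inj_onI)
    fix x y assume x: "x \<in> E" and y: "y \<in> E" and eq: "\<phi> x = \<phi> y"
    have xV: "x \<in> V" and yV: "y \<in> V" using HV[OF E] x y by blast+
    have "equivalent V Ht x (\<phi> x)" using equiv_sym[of V Ht "\<phi> x" x] phi1[OF xV] by simp
    moreover have "equivalent V Ht (\<phi> x) y" using phi1[OF yV] eq by simp
    ultimately have "equivalent V Ht x y" by (rule equiv_trans[OF hg])
    thus "x = y" by (rule edge_equiv[OF E x y])
  qed
  have tc: "two_covered T (induced Ht T)"
    unfolding two_covered_def
  proof (intro ballI impI)
    fix x y assume x: "x \<in> T" and y: "y \<in> T" and xy: "x \<noteq> y"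
    have xV: "x \<in> V" and yV: "y \<in> V" using x y assms(4) by blast+
    have "\<not> equivalent V Ht x y" using uniqT[OF x y] xy by blast
    hence "adjacent H' x y" if "H' = Ht" for H' using assms(3) xV yV that unfolding sym_terminal_def by blast
    then obtain E where E: "E \<in> Ht" "x \<in> E" "y \<in> E" unfolding adjacent_def by blast
    have F: "\<phi> ` E \<in> induced Ht T" unfolding induced_def using edge_map[OF E(1)] edge_T[OF HV[OF E(1)]] by simp
    have "x \<in> \<phi> ` E" using reflT[OF x] E(2) by (metis imageI)
    moreover have "y \<in> \<phi> ` E" using reflT[OF y] E(3) by (metis imageI)
    ultimately show "\<exists>E\<in>induced Ht T. x \<in> E \<and> y \<in> E" using F by blast
  qed
  have img: "\<phi> ` V = T"
  proof
    show "\<phi> ` V \<subseteq> T" using edge_T by blast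
    show "T \<subseteq> \<phi> ` V"
    proof
      fix t assume t: "t \<in> T"
      hence "t = \<phi> t" using reflT by simp
      moreover have "t \<in> V" using t assms(4) by blast
      ultimately show "t \<in> \<phi> ` V" by (rule image_eqI)
    qed
  qed
  have blow: "Ht = {E. E \<subseteq> V \<and> card E = 3 \<and> inj_on \<phi> E \<and> \<phi> ` E \<in> induced Ht T}"
  proof (rule set_eqI, rule iffI)
    fix E assume E: "E \<in> Ht"
    have "\<phi> ` E \<in> induced Ht T" unfolding induced_def using edge_map[OF E] edge_T[OF HV[OF E]] by simp
    thus "E \<in> {E. E \<subseteq> V \<and> card E = 3 \<and> inj_on \<phi> E \<and> \<phi> ` E \<in> induced Ht T}"
      using HV[OF E] H3[OF E] inj_edge[OF E] by simp
  next
    fix E assume "E \<in> {E. E \<subseteq> V \<and> card E = 3 \<and> inj_on \<phi> E \<and> \<phi> ` E \<in> induced Ht T}"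
    hence EV: "E \<subseteq> V" and inj: "inj_on \<phi> E" and F: "\<phi> ` E \<in> Ht" unfolding induced_def by simp_all
    define h where "h = the_inv_into E \<phi>"
    have hx: "h (\<phi> x) = x" if "x \<in> E" for x unfolding h_def by (rule the_inv_into_f_f[OF inj that])
    have "\<forall>y\<in>\<phi> ` E. equivalent V Ht (h y) y"
    proof
      fix y assume "y \<in> \<phi> ` E"
      then obtain x where x: "x \<in> E" and yx: "y = \<phi> x" by blast
      have "x \<in> V" using x EV by blast
      hence "equivalent V Ht x (\<phi> x)" using equiv_sym[of V Ht "\<phi> x" x] phi1 by simp
      thus "equivalent V Ht (h y) y" using hx[OF x] yx by simp
    qed
    hence "h ` \<phi> ` E \<in> Ht" by (rule map_edge[OF hg F])
    moreover have "h ` \<phi> ` E = E"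
    proof -
      have "h ` \<phi> ` E = (\<lambda>x. h (\<phi> x)) ` E" by (simp add: image_image)
      also have "\<dots> = (\<lambda>x. x) ` E" using hx by (intro image_cong) simp_all
      finally show ?thesis by simp
    qed
    ultimately show "E \<in> Ht" by simp
  qed
  have "is_blowup V Ht T (induced Ht T)" unfolding is_blowup_def using img blow by blast
  with tc cardle show ?thesis by simp
qed

end
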